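(* Let $n,g,k,t,u$ be positive integers. If there exist a large set of H-designs LH$(n,g,k,t)$ and an orthogonal array OA$(t,k,u)$, then there exists a large set of H-designs LH$(n,gu,k,t)$.
   Context: An H-design H$(n,g,k,t)$ is a triple $(Q,G,B)$ where $Q$ is a set of $ng$ points, $G$ is a partition of $Q$ into $n$ groups of size $g$, and $B$ is a set of $k$-subsets of $Q$ (blocks) such that each block meets each group in at most one point and any $t$ points from $t$ distinct groups lie in exactly one block. A large set of H-designs LH$(n,g,k,t)$ is a partition of the set of all $k$-subsets of $Q$ meeting each group of $G$ in at most one point into pairwise disjoint block sets, each of which forms (with $Q$ and $G$) an H-design H$(n,g,k,t)$. An orthogonal array OA$(t,k,u)$ is a $u^t\times k$ matrix with entries from $\mathbb{Z}_u$ such that in the submatrix formed by any $t$ columns each ordered $t$-tuple over $\mathbb{Z}_u$ occurs exactly once as a row. *)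

theory Defs
  imports Main
begin

definition group_structure :: "nat \<Rightarrow> nat \<Rightarrow> 'a set \<Rightarrow> 'a set set \<Rightarrow> bool" where
  "group_structure n g Q G \<longleftrightarrow>
     finite Q \<and> card Q = n * g \<and> \<Union>G = Q \<and> card G = n \<and>
     (\<forall>X\<in>G. card X = g) \<and>
     (\<forall>X\<in>G. \<forall>Y\<in>G. X \<noteq> Y \<longrightarrow> X \<inter> Y = {})"

definition transverse_sets :: "'a set \<Rightarrow> 'a set set \<Rightarrow> nat \<Rightarrow> 'a set set" where
  "transverse_sets Q G k = {S. S \<subseteq> Q \<and> card S = k \<and> (\<forall>X\<in>G. card (S \<inter> X) \<le> 1)}"

definition H_design :: "nat \<Rightarrow> nat \<Rightarrow> nat \<Rightarrow> nat \<Rightarrow> 'a set \<Rightarrow> 'a set set \<Rightarrow> 'a set set \<Rightarrow> bool" where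
  "H_design n g k t Q G B \<longleftrightarrow>
     group_structure n g Q G \<and>
     B \<subseteq> transverse_sets Q G k \<and>
     (\<forall>T \<in> transverse_sets Q G t. \<exists>!b. b \<in> B \<and> T \<subseteq> b)"

definition large_H_set :: "nat \<Rightarrow> nat \<Rightarrow> nat \<Rightarrow> nat \<Rightarrow> 'a set \<Rightarrow> 'a set set \<Rightarrow> 'a set set set \<Rightarrow> bool" where
  "large_H_set n g k t Q G L \<longleftrightarrow>
     group_structure n g Q G \<and>
     (\<forall>B\<in>L. H_design n g k t Q G B) \<and>
     (\<forall>B1\<in>L. \<forall>B2\<in>L. B1 \<noteq> B2 \<longrightarrow> B1 \<inter> B2 = {}) \<and>
     \<Union>L = transverse_sets Q G k"

definition orthogonal_array :: "nat \<Rightarrow> nat \<Rightarrow> nat \<Rightarrow> nat list list \<Rightarrow> bool" where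
  "orthogonal_array t k u M \<longleftrightarrow>
     length M = u ^ t \<and>
     (\<forall>r\<in>set M. length r = k \<and> (\<forall>x\<in>set r. x < u)) \<and>
     (\<forall>cs. length cs = t \<and> sorted_wrt (<) cs \<and> (\<forall>c\<in>set cs. c < k) \<longrightarrow>
        (\<forall>v. length v = t \<and> (\<forall>x\<in>set v. x < u) \<longrightarrow>
           card {i. i < length M \<and> map (\<lambda>c. M ! i ! c) cs = v} = 1))"

end

theory Submission imports Defs "HOL-Library.Nat_Bijection" begin

definition vecs :: "nat \<Rightarrow> nat \<Rightarrow> nat list set" where
  "vecs k u = {a. length a = k \<and> (\<forall>x\<in>set a. x < u)}"

lemma oa_set:
  assumes oa: "orthogonal_array t k u M"
    and D: "D \<subseteq> {..<k}" "card D = t" and h: "\<forall>i\<in>D. h i < u"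
  shows "card {j. j < length M \<and> (\<forall>i\<in>D. M ! j ! i = h i)} = 1"
proof -
  have fD: "finite D" using D(1) finite_subset by blast
  define cs where "cs = sorted_list_of_set D"
  have cs: "length cs = t" "sorted_wrt (<) cs" "set cs = D"
    using fD D by (auto simp: cs_def)
  have "card {j. j < length M \<and> map (\<lambda>c. M ! j ! c) cs = map h cs} = 1"
  proof -
    have "\<forall>c\<in>set cs. c < k" using cs(3) D(1) by auto
    moreover have "length (map h cs) = t" "\<forall>x\<in>set (map h cs). x < u" using cs h by auto
    ultimately show ?thesis using oa cs unfolding orthogonal_array_def by blast
  qed
  moreover have "\<And>j. (map (\<lambda>c. M ! j ! c) cs = map h cs) = (\<forall>i\<in>D. M ! j ! i = h i)"
    using cs(3) by (auto simp: map_eq_conv)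
  ultimately show ?thesis by simp
qed

lemma oa_rows_eq:
  assumes oa: "orthogonal_array t k u M" and tk: "t \<le> k"
    and r: "r1 \<in> set M" "r2 \<in> set M" and eq: "\<forall>i<t. r1 ! i = r2 ! i"
  shows "r1 = r2"
proof -
  obtain j1 where j1: "j1 < length M" "r1 = M ! j1" using r(1) by (auto simp: in_set_conv_nth)
  obtain j2 where j2: "j2 < length M" "r2 = M ! j2" using r(2) by (auto simp: in_set_conv_nth)
  have lt: "\<forall>i\<in>{..<t}. r1 ! i < u"
    using oa r(1) tk unfolding orthogonal_array_def by (auto simp: nth_mem)
  have "card {j. j < length M \<and> (\<forall>i\<in>{..<t}. M ! j ! i = r1 ! i)} = 1"
    by (rule oa_set[OF oa _ _ lt]) (use tk in auto)
  then obtain j where "{j. j < length M \<and> (\<forall>i\<in>{..<t}. M ! j ! i = r1 ! i)} = {j}"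
    using card_1_singletonE by blast
  moreover have "j1 \<in> {j. j < length M \<and> (\<forall>i\<in>{..<t}. M ! j ! i = r1 ! i)}" using j1 by auto
  moreover have "j2 \<in> {j. j < length M \<and> (\<forall>i\<in>{..<t}. M ! j ! i = r1 ! i)}" using j2 eq by auto
  ultimately show ?thesis using j1 j2 by auto
qed

lemma mod_cancel_lt:
  fixes x y z u :: nat
  assumes "x < u" "y < u" "(x + z) mod u = (y + z) mod u"
  shows "x = y"
proof -
  define w where "w = z mod u"
  have w: "w < u" using assms(1) w_def by simp
  have "(x + w) mod u = (y + w) mod u" using assms(3) unfolding w_def by (metis mod_add_right_eq)
  then show ?thesis using assms(1,2) w by (auto simp: mod_if split: if_splits)
qed

lemma add_mod_inv:
  fixes a r u :: nat
  assumes "r < u" "a < u"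
  shows "(r + (a + u - r) mod u) mod u = a"
proof -
  have "(r + (a + u - r) mod u) mod u = (r + (a + u - r)) mod u" by (metis mod_add_right_eq)
  also have "r + (a + u - r) = a + u" using assms by simp
  finally show ?thesis using assms by simp
qed

definition shiftv :: "nat \<Rightarrow> nat \<Rightarrow> nat list \<Rightarrow> nat list \<Rightarrow> nat list" where
  "shiftv k u w r = map (\<lambda>i. (r ! i + w ! i) mod u) [0..<k]"

lemma oa_classes:
  assumes oa: "orthogonal_array t k u M" and u: "u > 0"
  shows "\<exists>CC. (\<forall>C\<in>CC. C \<subseteq> vecs k u) \<and> (\<forall>C1\<in>CC. \<forall>C2\<in>CC. C1 \<noteq> C2 \<longrightarrow> C1 \<inter> C2 = {})
     \<and> \<Union>CC = vecs k u \<and>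
     (\<forall>C\<in>CC. \<forall>D h. D \<subseteq> {..<k} \<and> card D = t \<and> (\<forall>i\<in>D. h i < u) \<longrightarrow>
         (\<exists>!a. a \<in> C \<and> (\<forall>i\<in>D. a ! i = h i)))"
proof (cases "t \<le> k")
  case False
  have "\<not> (D \<subseteq> {..<k} \<and> card D = t)" for D :: "nat set"
  proof
    assume "D \<subseteq> {..<k} \<and> card D = t"
    then have "card D \<le> k" using card_mono[of "{..<k}" D] by auto
    then show False using False \<open>D \<subseteq> {..<k} \<and> card D = t\<close> by simp
  qed
  then show ?thesis
  proof (intro exI[of _ "{vecs k u}"] conjI)
    show "\<forall>C\<in>{vecs k u}. C \<subseteq> vecs k u" by simp
    show "\<forall>C1\<in>{vecs k u}. \<forall>C2\<in>{vecs k u}. C1 \<noteq> C2 \<longrightarrow> C1 \<inter> C2 = {}" by simp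
    show "\<Union>{vecs k u} = vecs k u" by simp
  qed blast
next
  case tk: True
  have rowM: "length r = k" "\<forall>x\<in>set r. x < u" if "r \<in> set M" for r
    using oa that unfolding orthogonal_array_def by auto
  have rowlt: "r ! i < u" if "r \<in> set M" "i < k" for r i
    using rowM[OF that(1)] that(2) by (auto simp: nth_mem)
  define W where "W = {w \<in> vecs k u. \<forall>i<t. w ! i = 0}"
  define cls where "cls w = shiftv k u w ` set M" for w
  have wlt: "w ! i < u" if "w \<in> W" "i < k" for w i
    using that unfolding W_def vecs_def by (auto simp: nth_mem)
  have shift_nth: "shiftv k u w r ! i = (r ! i + w ! i) mod u" if "i < k" for w r i
    using that by (simp add: shiftv_def)
  have cls_sub: "cls w \<subseteq> vecs k u" for w
    using u by (auto simp: cls_def vecs_def shiftv_def)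
  have good: "\<exists>!a. a \<in> cls w \<and> (\<forall>i\<in>D. a ! i = h i)"
    if w: "w \<in> W" and D: "D \<subseteq> {..<k}" "card D = t" and h: "\<forall>i\<in>D. h i < u" for w D h
  proof -
    define h' where "h' i = (h i + u - w ! i) mod u" for i
    have h': "\<forall>i\<in>D. h' i < u" using u by (auto simp: h'_def)
    have "card {j. j < length M \<and> (\<forall>i\<in>D. M ! j ! i = h' i)} = 1"
      by (rule oa_set[OF oa D h'])
    then obtain j where j: "{j. j < length M \<and> (\<forall>i\<in>D. M ! j ! i = h' i)} = {j}"
      using card_1_singletonE by blast
    then have jM: "j < length M" "\<forall>i\<in>D. M ! j ! i = h' i" by auto
    show ?thesis
    proof (rule ex1I[of _ "shiftv k u w (M ! j)"])
      show "shiftv k u w (M ! j) \<in> cls w \<and> (\<forall>i\<in>D. shiftv k u w (M ! j) ! i = h i)"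
      proof
        show "shiftv k u w (M ! j) \<in> cls w" using jM by (auto simp: cls_def)
        show "\<forall>i\<in>D. shiftv k u w (M ! j) ! i = h i"
        proof
          fix i assume i: "i \<in> D"
          have ik: "i < k" using i D by auto
          have "shiftv k u w (M ! j) ! i = (M ! j ! i + w ! i) mod u" by (rule shift_nth[OF ik])
          also have "M ! j ! i = h' i" using jM(2) i by blast
          finally have "shiftv k u w (M ! j) ! i = (h' i + w ! i) mod u" .
          also have "\<dots> = (w ! i + (h i + u - w ! i) mod u) mod u" by (simp add: h'_def add.commute)
          also have "\<dots> = h i" by (rule add_mod_inv) (use wlt[OF w ik] h i in auto)
          finally show "shiftv k u w (M ! j) ! i = h i" .
        qed
      qed
    next
      fix a assume a: "a \<in> cls w \<and> (\<forall>i\<in>D. a ! i = h i)"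
      then obtain r where r: "r \<in> set M" "a = shiftv k u w r" by (auto simp: cls_def)
      have "\<forall>i\<in>D. r ! i = M ! j ! i"
      proof
        fix i assume i: "i \<in> D"
        have ik: "i < k" using i D by auto
        have "a ! i = h i" using a i by blast
        then have "(r ! i + w ! i) mod u = h i" using r(2) shift_nth[OF ik, of w r] by simp
        moreover
        have "(M ! j ! i + w ! i) mod u = h i"
          using jM i ik add_mod_inv[OF wlt[OF w ik], of "h i"] h i
          by (simp add: h'_def add.commute)
        ultimately show "r ! i = M ! j ! i"
          using mod_cancel_lt[of "r ! i" u "M ! j ! i" "w ! i"] rowlt[OF r(1) ik]
            rowlt[OF nth_mem[OF jM(1)] ik] by simp
      qed
      then have "j' = j" if "j' < length M" "r = M ! j'" for j'
        using j that jM by auto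
      then have "r = M ! j" using r(1) by (metis in_set_conv_nth)
      then show "a = shiftv k u w (M ! j)" using r by simp
    qed
  qed
  show ?thesis
  proof (intro exI[of _ "cls ` W"] conjI)
    show "\<forall>C\<in>cls ` W. C \<subseteq> vecs k u" using cls_sub by auto
    show "\<forall>C\<in>cls ` W. \<forall>D h. D \<subseteq> {..<k} \<and> card D = t \<and> (\<forall>i\<in>D. h i < u) \<longrightarrow>
         (\<exists>!a. a \<in> C \<and> (\<forall>i\<in>D. a ! i = h i))"
    proof (intro ballI allI impI)
      fix C D h assume C: "C \<in> cls ` W" and Dh: "D \<subseteq> {..<k} \<and> card D = t \<and> (\<forall>i\<in>D. h i < u)"
      then obtain w where w: "w \<in> W" "C = cls w" by blast
      have "\<exists>!a. a \<in> cls w \<and> (\<forall>i\<in>D. a ! i = h i)"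
        using Dh by (intro good[OF w(1)]) auto
      then show "\<exists>!a. a \<in> C \<and> (\<forall>i\<in>D. a ! i = h i)" using w(2) by simp
    qed
    show "\<Union> (cls ` W) = vecs k u"
    proof
      show "\<Union> (cls ` W) \<subseteq> vecs k u" using cls_sub by auto
      show "vecs k u \<subseteq> \<Union> (cls ` W)"
      proof
        fix a assume a: "a \<in> vecs k u"
        have alt: "a ! i < u" if "i < k" for i using a that by (auto simp: vecs_def nth_mem)
        have "card {j. j < length M \<and> (\<forall>i\<in>{..<t}. M ! j ! i = a ! i)} = 1"
          by (rule oa_set[OF oa]) (use tk alt in auto)
        then obtain j where j: "{j. j < length M \<and> (\<forall>i\<in>{..<t}. M ! j ! i = a ! i)} = {j}"
          using card_1_singletonE by blast
        then have jM: "j < length M" "\<forall>i<t. M ! j ! i = a ! i" by auto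
        have rM: "M ! j \<in> set M" using jM by simp
        define w where "w = map (\<lambda>i. if i < t then 0 else (a ! i + u - M ! j ! i) mod u) [0..<k]"
        have wW: "w \<in> W"
        proof -
          have "length w = k" by (simp add: w_def)
          moreover have "\<forall>x\<in>set w. x < u" using u by (auto simp: w_def)
          moreover have "\<forall>i<t. w ! i = 0" using tk by (auto simp: w_def)
          ultimately show ?thesis by (simp add: W_def vecs_def)
        qed
        have "shiftv k u w (M ! j) = a"
        proof (rule nth_equalityI)
          show "length (shiftv k u w (M ! j)) = length a" using a by (simp add: shiftv_def vecs_def)
          fix i assume "i < length (shiftv k u w (M ! j))"
          then have ik: "i < k" by (simp add: shiftv_def)
          show "shiftv k u w (M ! j) ! i = a ! i"
          proof (cases "i < t")
            case True
            have "w ! i = 0" using ik True by (simp add: w_def)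
            moreover have "M ! j ! i = a ! i" using jM(2) True by blast
            ultimately show ?thesis using alt[OF ik] shift_nth[OF ik, of w "M ! j"] by simp
          next
            case False
            have "w ! i = (a ! i + u - M ! j ! i) mod u" using ik False by (simp add: w_def)
            then show ?thesis using add_mod_inv[OF rowlt[OF rM ik] alt[OF ik]] shift_nth[OF ik, of w "M ! j"]
              by simp
          qed
        qed
        then have "a \<in> cls w" using rM by (auto simp: cls_def)
        then show "a \<in> \<Union> (cls ` W)" using wW by auto
      qed
    qed
    show "\<forall>C1\<in>cls ` W. \<forall>C2\<in>cls ` W. C1 \<noteq> C2 \<longrightarrow> C1 \<inter> C2 = {}"
    proof (intro ballI impI)
      fix C1 C2 assume C: "C1 \<in> cls ` W" "C2 \<in> cls ` W" "C1 \<noteq> C2"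
      then obtain w1 w2 where w: "w1 \<in> W" "w2 \<in> W" "C1 = cls w1" "C2 = cls w2" by auto
      show "C1 \<inter> C2 = {}"
      proof (rule ccontr)
        assume "C1 \<inter> C2 \<noteq> {}"
        then obtain r1 r2 where r: "r1 \<in> set M" "r2 \<in> set M" "shiftv k u w1 r1 = shiftv k u w2 r2"
          using w by (auto simp: cls_def)
        have "\<forall>i<t. r1 ! i = r2 ! i"
        proof (intro allI impI)
          fix i assume it: "i < t"
          then have ik: "i < k" using tk by simp
          have "(r1 ! i + w1 ! i) mod u = (r2 ! i + w2 ! i) mod u"
          proof -
            have "shiftv k u w1 r1 ! i = shiftv k u w2 r2 ! i" using r(3) by simp
            then show ?thesis by (simp only: shift_nth[OF ik])
          qed
          then show "r1 ! i = r2 ! i" using w it rowlt[OF r(1) ik] rowlt[OF r(2) ik]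
            by (simp add: W_def)
        qed
        then have r12: "r1 = r2" using oa_rows_eq[OF oa tk r(1,2)] by simp
        have "w1 = w2"
        proof (rule nth_equalityI)
          show "length w1 = length w2" using w by (simp add: W_def vecs_def)
          fix i assume "i < length w1"
          then have ik: "i < k" using w by (simp add: W_def vecs_def)
          have "(w1 ! i + r1 ! i) mod u = (w2 ! i + r1 ! i) mod u"
          proof -
            have "shiftv k u w1 r1 ! i = shiftv k u w2 r1 ! i" using r(3) r12 by simp
            then have "(r1 ! i + w1 ! i) mod u = (r1 ! i + w2 ! i) mod u" by (simp only: shift_nth[OF ik])
            then show ?thesis by (simp only: add.commute)
          qed
          then show "w1 ! i = w2 ! i"
            using mod_cancel_lt[OF wlt[OF w(1) ik] wlt[OF w(2) ik]] by simp
        qed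
        then show False using C w by simp
      qed
    qed
  qed
qed


lemma gs_prod:
  fixes u :: nat
  assumes gs: "group_structure n g Q G" and u: "u > 0"
  shows "group_structure n (g * u) (Q \<times> {..<u}) ((\<lambda>X. X \<times> {..<u}) ` G)"
proof -
  have fQ: "finite Q" and cQ: "card Q = n * g" and UG: "\<Union>G = Q" and cG: "card G = n"
    and cX: "\<forall>X\<in>G. card X = g" and dis: "\<forall>X\<in>G. \<forall>Y\<in>G. X \<noteq> Y \<longrightarrow> X \<inter> Y = {}"
    using gs unfolding group_structure_def by auto
  have inj: "inj_on (\<lambda>X. X \<times> {..<u}) G"
    using u unfolding inj_on_def by (metis fst_image_times lessThan_iff empty_iff)
  show ?thesis unfolding group_structure_def
  proof (intro conjI ballI impI)
    show "finite (Q \<times> {..<u})" using fQ by simp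
    show "card (Q \<times> {..<u}) = n * (g * u)" using cQ by (simp add: card_cartesian_product)
    show "\<Union> ((\<lambda>X. X \<times> {..<u}) ` G) = Q \<times> {..<u}" using UG by auto
    show "card ((\<lambda>X. X \<times> {..<u}) ` G) = n" using card_image[OF inj] cG by simp
    fix X assume "X \<in> (\<lambda>X. X \<times> {..<u}) ` G"
    then obtain X0 where X0: "X0 \<in> G" "X = X0 \<times> {..<u}" by auto
    show "card X = g * u" using X0 cX by (simp add: card_cartesian_product)
    fix Y assume "Y \<in> (\<lambda>X. X \<times> {..<u}) ` G" "X \<noteq> Y"
    then obtain Y0 where Y0: "Y0 \<in> G" "Y = Y0 \<times> {..<u}" "X0 \<noteq> Y0" using X0 by auto
    show "X \<inter> Y = {}" using dis X0 Y0 by auto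
  qed
qed

lemma F1:
  fixes u :: nat
  assumes gs: "group_structure n g Q G"
    and S: "S \<in> transverse_sets (Q \<times> {..<u}) ((\<lambda>X. X \<times> {..<u}) ` G) m"
  shows "inj_on fst S" "fst ` S \<in> transverse_sets Q G m"
proof -
  have fQ: "finite Q" and UG: "\<Union>G = Q" using gs unfolding group_structure_def by auto
  have SQ: "S \<subseteq> Q \<times> {..<u}" and cS: "card S = m"
    and meet: "\<forall>X\<in>G. card (S \<inter> (X \<times> {..<u})) \<le> 1"
    using S unfolding transverse_sets_def by auto
  have fS: "finite S" by (rule finite_subset[OF SQ]) (simp add: fQ)
  show inj: "inj_on fst S"
  proof (rule inj_onI)
    fix p q assume pq: "p \<in> S" "q \<in> S" "fst p = fst q"
    then have "fst p \<in> Q" using SQ by auto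
    then obtain X where X: "X \<in> G" "fst p \<in> X" using UG by auto
    have "p \<in> S \<inter> (X \<times> {..<u})" "q \<in> S \<inter> (X \<times> {..<u})" using pq X SQ by (auto simp: mem_Times_iff)
    moreover have fin: "finite (S \<inter> (X \<times> {..<u}))" using fS by simp
    moreover have "card (S \<inter> (X \<times> {..<u})) \<le> Suc 0" using meet X(1) by simp
    ultimately show "p = q" using card_le_Suc0_iff_eq[OF fin] by blast
  qed
  show "fst ` S \<in> transverse_sets Q G m" unfolding transverse_sets_def
  proof (intro CollectI conjI ballI)
    show "fst ` S \<subseteq> Q" using SQ by auto
    show "card (fst ` S) = m" using card_image[OF inj] cS by simp
    fix X assume X: "X \<in> G"
    have "fst ` S \<inter> X = fst ` (S \<inter> (X \<times> {..<u}))" using SQ by force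
    moreover have "card (fst ` (S \<inter> (X \<times> {..<u}))) \<le> card (S \<inter> (X \<times> {..<u}))"
      using fS by (intro card_image_le) simp
    ultimately have "card (fst ` S \<inter> X) \<le> card (S \<inter> (X \<times> {..<u}))" by simp
    then show "card (fst ` S \<inter> X) \<le> 1" using meet X by (meson le_trans)
  qed
qed

definition sig :: "'a set \<Rightarrow> 'a \<Rightarrow> nat" where
  "sig b = (SOME s. bij_betw s b {..<card b})"

lemma sig_bij: "finite b \<Longrightarrow> bij_betw (sig b) b {..<card b}"
proof -
  assume "finite b"
  then have "\<exists>s. bij_betw s b {..<card b}" by (simp add: bij_betw_iff_card)
  then show ?thesis unfolding sig_def by (rule someI_ex)
qed

definition blk :: "'a set \<Rightarrow> nat list \<Rightarrow> ('a \<times> nat) set" where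
  "blk b a = (\<lambda>x. (x, a ! sig b x)) ` b"

lemma fst_blk[simp]: "fst ` blk b a = b"
  unfolding blk_def by (simp add: image_image)

lemma blk_sub: "T \<subseteq> blk b a \<longleftrightarrow> fst ` T \<subseteq> b \<and> (\<forall>p\<in>T. snd p = a ! sig b (fst p))"
  unfolding blk_def by (auto simp: subset_iff image_iff; force)

lemma F2:
  fixes u :: nat
  assumes gs: "group_structure n g Q G"
    and b: "b \<in> transverse_sets Q G k" and a: "a \<in> vecs k u"
  shows "blk b a \<in> transverse_sets (Q \<times> {..<u}) ((\<lambda>X. X \<times> {..<u}) ` G) k"
proof -
  have fQ: "finite Q" using gs unfolding group_structure_def by auto
  have bQ: "b \<subseteq> Q" and cb: "card b = k" and meet: "\<forall>X\<in>G. card (b \<inter> X) \<le> 1"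
    using b unfolding transverse_sets_def by auto
  have fb: "finite b" using finite_subset[OF bQ fQ] .
  have sb: "sig b x < k" if "x \<in> b" for x using sig_bij[OF fb] that cb by (auto dest: bij_betwE)
  have inj: "inj_on (\<lambda>x. (x, a ! sig b x)) b" by (auto simp: inj_on_def)
  show ?thesis unfolding transverse_sets_def
  proof (intro CollectI conjI ballI)
    show "blk b a \<subseteq> Q \<times> {..<u}" using bQ a sb unfolding blk_def vecs_def by (auto simp: nth_mem)
    show "card (blk b a) = k" using card_image[OF inj] cb by (simp add: blk_def)
    fix X' assume "X' \<in> (\<lambda>X. X \<times> {..<u}) ` G"
    then obtain X where X: "X \<in> G" "X' = X \<times> {..<u}" by auto
    have "blk b a \<inter> X' \<subseteq> (\<lambda>x. (x, a ! sig b x)) ` (b \<inter> X)" using X unfolding blk_def by auto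
    then have "card (blk b a \<inter> X') \<le> card ((\<lambda>x. (x, a ! sig b x)) ` (b \<inter> X))"
      using fb by (intro card_mono) auto
    also have "\<dots> \<le> card (b \<inter> X)" using card_image_le fb by blast
    finally have "card (blk b a \<inter> X') \<le> card (b \<inter> X)" .
    then show "card (blk b a \<inter> X') \<le> 1" using meet X by (meson le_trans)
  qed
qed

lemma F3:
  fixes u :: nat
  assumes gs: "group_structure n g Q G"
    and S: "S \<in> transverse_sets (Q \<times> {..<u}) ((\<lambda>X. X \<times> {..<u}) ` G) k"
  shows "\<exists>a\<in>vecs k u. S = blk (fst ` S) a"
proof -
  define b where "b = fst ` S"
  have inj: "inj_on fst S" and bT: "b \<in> transverse_sets Q G k" using F1[OF gs S] b_def by auto
  have fQ: "finite Q" using gs unfolding group_structure_def by auto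
  have SQ: "S \<subseteq> Q \<times> {..<u}" using S unfolding transverse_sets_def by auto
  have fb: "finite b" "card b = k" using bT finite_subset[of b Q] fQ unfolding transverse_sets_def by auto
  have sbij: "bij_betw (sig b) b {..<k}" using sig_bij[OF fb(1)] fb(2) by simp
  define lab where "lab x = (THE c. (x, c) \<in> S)" for x
  have lab: "lab x = c" if "(x, c) \<in> S" for x c
    unfolding lab_def
  proof (rule the_equality)
    show "(x, c) \<in> S" by fact
    fix c' assume "(x, c') \<in> S"
    then show "c' = c" using inj_onD[OF inj, of "(x,c')" "(x,c)"] that by auto
  qed
  have labS: "(x, lab x) \<in> S" if "x \<in> b" for x
    using that lab unfolding b_def by force
  define a where "a = map (\<lambda>i. lab (inv_into b (sig b) i)) [0..<k]"
  have a_sig: "a ! sig b x = lab x" if "x \<in> b" for x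
  proof -
    have "sig b x < k" using sbij that by (auto dest: bij_betwE)
    then have "a ! sig b x = lab (inv_into b (sig b) (sig b x))" by (simp add: a_def)
    also have "\<dots> = lab x" using that sbij by (simp add: bij_betw_def)
    finally show ?thesis .
  qed
  have aV: "a \<in> vecs k u"
  proof -
    have "lab (inv_into b (sig b) i) < u" if "i < k" for i
    proof -
      have "inv_into b (sig b) i \<in> b" using sbij that by (metis bij_betw_def inv_into_into lessThan_iff)
      then show ?thesis using labS SQ by auto
    qed
    then show ?thesis by (auto simp: vecs_def a_def)
  qed
  have "S = blk b a"
  proof
    show "S \<subseteq> blk b a" unfolding blk_sub b_def using a_sig lab b_def by auto
    show "blk b a \<subseteq> S" unfolding blk_def using a_sig labS by auto
  qed
  then show ?thesis using aV b_def by auto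
qed

lemma F4:
  assumes fb: "finite b" "card b = k" and a: "a1 \<in> vecs k u" "a2 \<in> vecs k u"
    and eq: "blk b a1 = blk b a2"
  shows "a1 = a2"
proof (rule nth_equalityI)
  show "length a1 = length a2" using a by (simp add: vecs_def)
  have sbij: "bij_betw (sig b) b {..<k}" using sig_bij[OF fb(1)] fb(2) by simp
  fix i assume "i < length a1"
  then have ik: "i < k" using a by (simp add: vecs_def)
  then obtain x where x: "x \<in> b" "sig b x = i" using sbij by (metis bij_betw_def imageE lessThan_iff)
  have "(x, a1 ! i) \<in> blk b a2" using eq x unfolding blk_def by auto
  then show "a1 ! i = a2 ! i" using x unfolding blk_def by auto
qed

lemma LH_prod:
  fixes Q :: "'a set" and u :: nat
  assumes LH: "large_H_set n g k t Q G L" and u: "u > 0"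
    and CCsub: "\<forall>C\<in>CC. C \<subseteq> vecs k u"
    and CCdis: "\<forall>C1\<in>CC. \<forall>C2\<in>CC. C1 \<noteq> C2 \<longrightarrow> C1 \<inter> C2 = {}"
    and CCun: "\<Union>CC = vecs k u"
    and CCgood: "\<forall>C\<in>CC. \<forall>D h. D \<subseteq> {..<k} \<and> card D = t \<and> (\<forall>i\<in>D. h i < u) \<longrightarrow>
         (\<exists>!a. a \<in> C \<and> (\<forall>i\<in>D. a ! i = h i))"
  shows "\<exists>L'. large_H_set n (g * u) k t (Q \<times> {..<u}) ((\<lambda>X. X \<times> {..<u}) ` G) L'"
proof -
  define Q' where "Q' = Q \<times> {..<u}"
  define G' where "G' = (\<lambda>X. X \<times> {..<u}) ` G"
  have gs: "group_structure n g Q G" and HD: "\<forall>B\<in>L. H_design n g k t Q G B"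
    and Ldis: "\<forall>B1\<in>L. \<forall>B2\<in>L. B1 \<noteq> B2 \<longrightarrow> B1 \<inter> B2 = {}"
    and Lun: "\<Union>L = transverse_sets Q G k"
    using LH unfolding large_H_set_def by auto
  have fQ: "finite Q" using gs unfolding group_structure_def by auto
  have gs': "group_structure n (g * u) Q' G'" using gs_prod[OF gs u] by (simp add: Q'_def G'_def)
  define DD where "DD (B :: 'a set set) (C :: nat list set) = {blk b a | b a. b \<in> B \<and> a \<in> C}" for B C
  define L' where "L' = {DD B C | B C. B \<in> L \<and> C \<in> CC}"
  have Btr: "B \<subseteq> transverse_sets Q G k" if "B \<in> L" for B
    using Lun that by auto
  have fin_tr: "finite b" "card b = k" if "b \<in> transverse_sets Q G k" for b
    using that finite_subset[of b Q] fQ unfolding transverse_sets_def by auto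
  have DDsub: "DD B C \<subseteq> transverse_sets Q' G' k" if "B \<in> L" "C \<in> CC" for B C
    using F2[OF gs] Btr[OF that(1)] CCsub that(2) unfolding DD_def Q'_def G'_def by blast
  have HD': "H_design n (g * u) k t Q' G' (DD B C)" if BL: "B \<in> L" and CC: "C \<in> CC" for B C
    unfolding H_design_def
  proof (intro conjI ballI)
    show "group_structure n (g * u) Q' G'" by fact
    show "DD B C \<subseteq> transverse_sets Q' G' k" using DDsub BL CC .
    fix T assume T: "T \<in> transverse_sets Q' G' t"
    have injT: "inj_on fst T" and T0: "fst ` T \<in> transverse_sets Q G t"
      using F1[OF gs, of T u t] T unfolding Q'_def G'_def by auto
    have TQ: "T \<subseteq> Q \<times> {..<u}" using T unfolding transverse_sets_def Q'_def by auto
    have HB: "H_design n g k t Q G B" using HD BL by blast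
    have all: "\<forall>T\<in>transverse_sets Q G t. \<exists>!b. b \<in> B \<and> T \<subseteq> b"
      using HB unfolding H_design_def by (elim conjE)
    have ex1: "\<exists>!b. b \<in> B \<and> fst ` T \<subseteq> b" using bspec[OF all T0] .
    obtain b0 where bb: "b0 \<in> B \<and> fst ` T \<subseteq> b0" and bu0: "\<forall>y. y \<in> B \<and> fst ` T \<subseteq> y \<longrightarrow> y = b0"
      using ex1E[OF ex1] by blast
    have b0: "b0 \<in> B" "fst ` T \<subseteq> b0" using bb by auto
    have b0u: "\<And>b. b \<in> B \<Longrightarrow> fst ` T \<subseteq> b \<Longrightarrow> b = b0" using bu0 by blast
    have b0tr: "b0 \<in> transverse_sets Q G k" using Btr[OF BL] b0 by auto
    have sbij: "bij_betw (sig b0) b0 {..<k}" using sig_bij[OF fin_tr(1)[OF b0tr]] fin_tr(2)[OF b0tr] by simp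
    define lab where "lab x = (THE c. (x, c) \<in> T)" for x
    have lab: "lab x = c" if "(x, c) \<in> T" for x c
      unfolding lab_def
    proof (rule the_equality)
      show "(x, c) \<in> T" by fact
      fix c' assume "(x, c') \<in> T"
      then show "c' = c" using inj_onD[OF injT, of "(x,c')" "(x,c)"] that by auto
    qed
    define Dc where "Dc = sig b0 ` fst ` T"
    define h where "h i = lab (inv_into b0 (sig b0) i)" for i
    have sig_inj: "inj_on (sig b0) b0" using sbij by (simp add: bij_betw_def)
    have DcK: "Dc \<subseteq> {..<k}" using sbij b0 unfolding Dc_def by (auto dest: bij_betwE)
    have cDc: "card Dc = t"
      using T0 card_image[OF inj_on_subset[OF sig_inj b0(2)]] unfolding Dc_def transverse_sets_def by auto
    have h_sig: "h (sig b0 x) = lab x" if "x \<in> b0" for x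
      using that sig_inj by (simp add: h_def)
    have hlt: "\<forall>i\<in>Dc. h i < u"
    proof
      fix i assume "i \<in> Dc"
      then obtain p where p: "p \<in> T" "i = sig b0 (fst p)" unfolding Dc_def by auto
      have "fst p \<in> b0" using p b0 by auto
      then have "h i = snd p" using p h_sig lab[of "fst p" "snd p"] by simp
      then show "h i < u" using p TQ by auto
    qed
    have gC: "\<forall>D h. D \<subseteq> {..<k} \<and> card D = t \<and> (\<forall>i\<in>D. h i < u) \<longrightarrow>
         (\<exists>!a. a \<in> C \<and> (\<forall>i\<in>D. a ! i = h i))" using bspec[OF CCgood CC] .
    have ex1a: "\<exists>!a. a \<in> C \<and> (\<forall>i\<in>Dc. a ! i = h i)"
      using spec[OF spec[OF gC, of Dc], of h] DcK cDc hlt by blast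
    obtain a where aa: "a \<in> C \<and> (\<forall>i\<in>Dc. a ! i = h i)"
      and au0: "\<forall>y. y \<in> C \<and> (\<forall>i\<in>Dc. y ! i = h i) \<longrightarrow> y = a"
      using ex1E[OF ex1a] by blast
    have a: "a \<in> C" "\<forall>i\<in>Dc. a ! i = h i" using aa by auto
    have au: "\<And>a'. a' \<in> C \<Longrightarrow> \<forall>i\<in>Dc. a' ! i = h i \<Longrightarrow> a' = a" using au0 by blast
    have sub_iff: "T \<subseteq> blk b0 a' \<longleftrightarrow> (\<forall>i\<in>Dc. a' ! i = h i)" for a'
    proof -
      have "T \<subseteq> blk b0 a' \<longleftrightarrow> (\<forall>p\<in>T. snd p = a' ! sig b0 (fst p))" using b0(2) blk_sub by blast
      also have "\<dots> \<longleftrightarrow> (\<forall>i\<in>Dc. a' ! i = h i)"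
      proof -
        have "snd p = h (sig b0 (fst p))" if "p \<in> T" for p
          using that b0(2) h_sig lab[of "fst p" "snd p"] by auto
        then show ?thesis unfolding Dc_def by auto
      qed
      finally show ?thesis .
    qed
    show "\<exists>!S. S \<in> DD B C \<and> T \<subseteq> S"
    proof (rule ex1I[of _ "blk b0 a"])
      show "blk b0 a \<in> DD B C \<and> T \<subseteq> blk b0 a" using a b0 sub_iff unfolding DD_def by blast
    next
      fix S assume S: "S \<in> DD B C \<and> T \<subseteq> S"
      then obtain b1 a1 where ba1: "S = blk b1 a1" "b1 \<in> B" "a1 \<in> C" unfolding DD_def by blast
      have "fst ` T \<subseteq> b1" using S ba1 fst_blk by (metis image_mono)
      then have "b1 = b0" using b0u ba1 by blast
      then have "\<forall>i\<in>Dc. a1 ! i = h i" using sub_iff S ba1 by simp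
      then have "a1 = a" using au ba1 by blast
      then show "S = blk b0 a" using ba1 \<open>b1 = b0\<close> by simp
    qed
  qed
  have "large_H_set n (g * u) k t Q' G' L'" unfolding large_H_set_def
  proof (intro conjI ballI impI)
    show "group_structure n (g * u) Q' G'" by fact
    fix D assume "D \<in> L'"
    then obtain B C where "B \<in> L" "C \<in> CC" "D = DD B C" unfolding L'_def by blast
    then show "H_design n (g * u) k t Q' G' D" using HD' by simp
  next
    fix D1 D2 assume D: "D1 \<in> L'" "D2 \<in> L'" "D1 \<noteq> D2"
    then obtain B1 C1 B2 C2 where BC: "B1 \<in> L" "C1 \<in> CC" "D1 = DD B1 C1"
      "B2 \<in> L" "C2 \<in> CC" "D2 = DD B2 C2" unfolding L'_def by blast
    show "D1 \<inter> D2 = {}"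
    proof (rule ccontr)
      assume "D1 \<inter> D2 \<noteq> {}"
      then obtain b1 a1 b2 a2 where ba: "blk b1 a1 = blk b2 a2" "b1 \<in> B1" "a1 \<in> C1" "b2 \<in> B2" "a2 \<in> C2"
        using BC unfolding DD_def by blast
      have "b1 = b2" using ba(1) fst_blk by metis
      have b1tr: "b1 \<in> transverse_sets Q G k" using ba(2) Btr BC by blast
      have "a1 = a2"
        using F4[OF fin_tr[OF b1tr]] ba CCsub BC \<open>b1 = b2\<close> by blast
      have "B1 = B2" using Ldis BC ba \<open>b1 = b2\<close> by blast
      moreover have "C1 = C2" using CCdis BC ba \<open>a1 = a2\<close> by blast
      ultimately show False using D BC by simp
    qed
  next
    show "\<Union>L' = transverse_sets Q' G' k"
    proof
      show "\<Union>L' \<subseteq> transverse_sets Q' G' k" using DDsub unfolding L'_def by blast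
      show "transverse_sets Q' G' k \<subseteq> \<Union>L'"
      proof
        fix S assume S: "S \<in> transverse_sets Q' G' k"
        obtain a where a: "a \<in> vecs k u" "S = blk (fst ` S) a"
          using F3[OF gs, of S u] S unfolding Q'_def G'_def by blast
        have "fst ` S \<in> transverse_sets Q G k" using F1[OF gs, of S u k] S unfolding Q'_def G'_def by blast
        then obtain B where B: "B \<in> L" "fst ` S \<in> B" using Lun by blast
        obtain C where C: "C \<in> CC" "a \<in> C" using a CCun by blast
        have "S \<in> DD B C" unfolding DD_def using a B C by blast
        then show "S \<in> \<Union>L'" unfolding L'_def using B C by blast
      qed
    qed
  qed
  then show ?thesis unfolding Q'_def G'_def by blast
qed


lemma tr_image:
  assumes f: "inj f"
  shows "transverse_sets (f ` Q) ((`) f ` G) m = (`) f ` transverse_sets Q G m"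
proof
  have key: "f ` S \<in> transverse_sets (f ` Q) ((`) f ` G) m" if "S \<in> transverse_sets Q G m" for S
    using that unfolding transverse_sets_def
    by (auto simp: card_image inj_on_subset[OF f] image_Int[OF f, symmetric])
  show "(`) f ` transverse_sets Q G m \<subseteq> transverse_sets (f ` Q) ((`) f ` G) m" using key by blast
  show "transverse_sets (f ` Q) ((`) f ` G) m \<subseteq> (`) f ` transverse_sets Q G m"
  proof
    fix S' assume S': "S' \<in> transverse_sets (f ` Q) ((`) f ` G) m"
    then obtain S where S: "S \<subseteq> Q" "S' = f ` S" unfolding transverse_sets_def by (auto simp: subset_image_iff)
    have "S \<in> transverse_sets Q G m" using S' S unfolding transverse_sets_def
      by (auto simp: card_image inj_on_subset[OF f] image_Int[OF f, symmetric])
    then show "S' \<in> (`) f ` transverse_sets Q G m" using S by blast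
  qed
qed

lemma gs_image:
  assumes f: "inj f" and gs: "group_structure n g Q G"
  shows "group_structure n g (f ` Q) ((`) f ` G)"
proof -
  have injI: "inj ((`) f)" using f by (simp add: inj_def inj_image_eq_iff)
  have fQ: "finite Q" and cQ: "card Q = n * g" and UG: "\<Union>G = Q" and cG: "card G = n"
    and cX: "\<forall>X\<in>G. card X = g" and dis: "\<forall>X\<in>G. \<forall>Y\<in>G. X \<noteq> Y \<longrightarrow> X \<inter> Y = {}"
    using gs unfolding group_structure_def by auto
  show ?thesis unfolding group_structure_def
  proof (intro conjI ballI impI)
    show "finite (f ` Q)" using fQ by simp
    show "card (f ` Q) = n * g" using cQ card_image[OF inj_on_subset[OF f]] by simp
    show "\<Union> ((`) f ` G) = f ` Q" using UG by blast
    show "card ((`) f ` G) = n" using cG card_image[OF inj_on_subset[OF injI]] by simp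
    fix X assume "X \<in> (`) f ` G"
    then obtain X0 where X0: "X0 \<in> G" "X = f ` X0" by blast
    show "card X = g" using X0 cX card_image[OF inj_on_subset[OF f]] by simp
    fix Y assume "Y \<in> (`) f ` G" "X \<noteq> Y"
    then obtain Y0 where Y0: "Y0 \<in> G" "Y = f ` Y0" "X0 \<noteq> Y0" using X0 by blast
    have "X \<inter> Y = f ` (X0 \<inter> Y0)" using X0 Y0 image_Int[OF f] by simp
    then show "X \<inter> Y = {}" using dis X0 Y0 by simp
  qed
qed

lemma LH_image:
  assumes f: "inj f" and LH: "large_H_set n g k t Q G L"
  shows "large_H_set n g k t (f ` Q) ((`) f ` G) ((`) ((`) f) ` L)"
proof -
  have injI: "inj ((`) f)" using f by (simp add: inj_def inj_image_eq_iff)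
  have gs: "group_structure n g Q G" and HD: "\<forall>B\<in>L. H_design n g k t Q G B"
    and Ldis: "\<forall>B1\<in>L. \<forall>B2\<in>L. B1 \<noteq> B2 \<longrightarrow> B1 \<inter> B2 = {}"
    and Lun: "\<Union>L = transverse_sets Q G k"
    using LH unfolding large_H_set_def by auto
  have HD': "H_design n g k t (f ` Q) ((`) f ` G) ((`) f ` B)" if HB: "H_design n g k t Q G B" for B
    unfolding H_design_def
  proof (intro conjI ballI)
    show "group_structure n g (f ` Q) ((`) f ` G)" using gs_image[OF f gs] .
    show "(`) f ` B \<subseteq> transverse_sets (f ` Q) ((`) f ` G) k"
      using that unfolding H_design_def tr_image[OF f] by auto
    fix T' assume "T' \<in> transverse_sets (f ` Q) ((`) f ` G) t"
    then obtain T where T: "T \<in> transverse_sets Q G t" "T' = f ` T" unfolding tr_image[OF f] by auto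
    have all: "\<forall>T\<in>transverse_sets Q G t. \<exists>!b. b \<in> B \<and> T \<subseteq> b"
      using HB unfolding H_design_def by (elim conjE)
    have ex1: "\<exists>!b. b \<in> B \<and> T \<subseteq> b" using bspec[OF all T(1)] .
    obtain b where bb: "b \<in> B \<and> T \<subseteq> b" and bu0: "\<forall>y. y \<in> B \<and> T \<subseteq> y \<longrightarrow> y = b"
      using ex1E[OF ex1] by blast
    have b: "b \<in> B" "T \<subseteq> b" using bb by auto
    have bu: "\<And>b'. b' \<in> B \<Longrightarrow> T \<subseteq> b' \<Longrightarrow> b' = b" using bu0 by blast
    show "\<exists>!b'. b' \<in> (`) f ` B \<and> T' \<subseteq> b'"
    proof (rule ex1I[of _ "f ` b"])
      show "f ` b \<in> (`) f ` B \<and> T' \<subseteq> f ` b" using b T by auto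
      fix b' assume "b' \<in> (`) f ` B \<and> T' \<subseteq> b'"
      then obtain b1 where "b1 \<in> B" "b' = f ` b1" "f ` T \<subseteq> f ` b1" using T by auto
      then show "b' = f ` b" using bu inj_image_subset_iff[OF f] by metis
    qed
  qed
  show ?thesis unfolding large_H_set_def
  proof (intro conjI ballI impI)
    show "group_structure n g (f ` Q) ((`) f ` G)" using gs_image[OF f gs] .
    fix B' assume "B' \<in> (`) ((`) f) ` L"
    then show "H_design n g k t (f ` Q) ((`) f ` G) B'" using HD HD' by auto
  next
    fix B1 B2 assume B: "B1 \<in> (`) ((`) f) ` L" "B2 \<in> (`) ((`) f) ` L" "B1 \<noteq> B2"
    then obtain C1 C2 where "C1 \<in> L" "C2 \<in> L" "B1 = (`) f ` C1" "B2 = (`) f ` C2" "C1 \<noteq> C2" by auto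
    then show "B1 \<inter> B2 = {}" using Ldis image_Int[OF injI, of C1 C2] by auto
  next
    show "\<Union> ((`) ((`) f) ` L) = transverse_sets (f ` Q) ((`) f ` G) k"
      unfolding tr_image[OF f] Lun[symmetric] by blast
  qed
qed

theorem theorem4:
  fixes n g k t u :: nat
  assumes "n > 0" "g > 0" "k > 0" "t > 0" "u > 0"
    and "\<exists>(Q::nat set) G L. large_H_set n g k t Q G L"
    and "\<exists>M. orthogonal_array t k u M"
  shows "\<exists>(Q::nat set) G L. large_H_set n (g * u) k t Q G L"
proof -
  obtain Q :: "nat set" and G L where LH: "large_H_set n g k t Q G L" using assms(6) by blast
  obtain M where M: "orthogonal_array t k u M" using assms(7) by blast
  from oa_classes[OF M assms(5)] obtain CC where CCc:
     "(\<forall>C\<in>CC. C \<subseteq> vecs k u) \<and> (\<forall>C1\<in>CC. \<forall>C2\<in>CC. C1 \<noteq> C2 \<longrightarrow> C1 \<inter> C2 = {}) \<and>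
     \<Union>CC = vecs k u \<and>
     (\<forall>C\<in>CC. \<forall>D h. D \<subseteq> {..<k} \<and> card D = t \<and> (\<forall>i\<in>D. h i < u) \<longrightarrow>
         (\<exists>!a. a \<in> C \<and> (\<forall>i\<in>D. a ! i = h i)))"
    by (rule exE)
  have L'ex: "\<exists>L'. large_H_set n (g * u) k t (Q \<times> {..<u}) ((\<lambda>X. X \<times> {..<u}) ` G) L'"
    by (rule LH_prod[OF LH assms(5) conjunct1[OF CCc] conjunct1[OF conjunct2[OF CCc]]
          conjunct1[OF conjunct2[OF conjunct2[OF CCc]]] conjunct2[OF conjunct2[OF conjunct2[OF CCc]]]])
  then obtain L' where L': "large_H_set n (g * u) k t (Q \<times> {..<u}) ((\<lambda>X. X \<times> {..<u}) ` G) L'"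
    by (rule exE)
  have inj: "inj prod_encode" by (rule inj_prod_encode)
  have "large_H_set n (g * u) k t (prod_encode ` (Q \<times> {..<u}))
     ((`) prod_encode ` ((\<lambda>X. X \<times> {..<u}) ` G)) ((`) ((`) prod_encode) ` L')"
    by (rule LH_image[OF inj L'])
  then show ?thesis by (intro exI)
qed

end
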